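(* Let $A\in\mathbb{R}^{d\times n}$ (with $n>d$) have nonzero columns $a_1,\dots,a_n$. Let $x_0\in\mathbb{R}^n$ have support $S_0$ with $|S_0|=m_0$, and let $y_0=Ax_0$. Suppose that the Exact Recovery Condition fails for $S_0$. Suppose further that there is $x_1\in\mathbb{R}^n$ whose support $S_1$ satisfies $S_1\supseteq S_0$, $|S_1|=m_1>m_0$, and that the Exact Recovery Condition holds for $S_1$. Then Orthogonal Matching Pursuit applied to $y_0$ recovers $x_0$ within $m_1$ steps: after at most $m_1$ iterations the residual is zero and the coefficient vector produced by OMP (with entries outside the selected index set set to zero) equals $x_0$.
   Context: For $S\subset\{1,\dots,n\}$, let $A_S$ be the matrix of columns $a_i$, $i\in S$. The Exact Recovery Condition (ERC) holds for $S$ if $A_S$ has full column rank and $\max_{j\notin S}\|A_S^{+}a_j\|_1<1$, where $A_S^{+}$ is the Moore–Penrose pseudoinverse; it fails otherwise. Orthogonal Matching Pursuit (OMP) on a signal $y$: set $r_0=y$, $\Lambda_0=\emptyset$; at iteration $k\ge1$, if $r_{k-1}=0$ stop; otherwise choose $j_k\in\arg\max_j|a_j^Tr_{k-1}|$, set $\Lambda_k=\Lambda_{k-1}\cup\{j_k\}$, let $x^{(k)}$ be the least-squares coefficients minimizing $\|y-A_{\Lambda_k}z\|_2$ over $z$ (supported on $\Lambda_k$, zero elsewhere), and set $r_k=y-Ax^{(k)}$. *)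

theory Defs
  imports "HOL-Analysis.Analysis"
begin

text \<open>Vectors in R^n are \<open>real^'n\<close>, a d x n matrix is \<open>real^'n^'d\<close>;
  the column a_j is \<open>column j A\<close>. A vector "supported on S" is an element
  of real^'n vanishing outside S; then A_S z_S = A *v z.\<close>

definition supp :: "real^'n \<Rightarrow> 'n set" where
  "supp x = {i. x $ i \<noteq> 0}"

definition l1norm :: "real^'n \<Rightarrow> real" where
  "l1norm z = (\<Sum>i\<in>UNIV. \<bar>z $ i\<bar>)"

definition full_col_rank :: "real^'n^'d \<Rightarrow> 'n set \<Rightarrow> bool" where
  "full_col_rank A S \<longleftrightarrow> inj_on (\<lambda>i. column i A) S \<and> independent ((\<lambda>i. column i A) ` S)"

definition ls_set :: "real^'n^'d \<Rightarrow> 'n set \<Rightarrow> real^'d \<Rightarrow> (real^'n) set" where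
  "ls_set A S b = {z. (\<forall>i. i \<notin> S \<longrightarrow> z $ i = 0) \<and>
     (\<forall>w. (\<forall>i. i \<notin> S \<longrightarrow> w $ i = 0) \<longrightarrow> norm (b - A *v z) \<le> norm (b - A *v w))}"

text \<open>Moore--Penrose pseudoinverse of A_S applied to b: the least-squares
  solution of minimum Euclidean norm (embedded with zeros outside S).\<close>
definition pinv_apply :: "real^'n^'d \<Rightarrow> 'n set \<Rightarrow> real^'d \<Rightarrow> real^'n" where
  "pinv_apply A S b = (THE z. z \<in> ls_set A S b \<and> (\<forall>w\<in>ls_set A S b. norm z \<le> norm w))"

definition ERC :: "real^'n^'d \<Rightarrow> 'n set \<Rightarrow> bool" where
  "ERC A S \<longleftrightarrow> full_col_rank A S \<and>
     (\<forall>j. j \<notin> S \<longrightarrow> l1norm (pinv_apply A S (column j A)) < 1)"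

text \<open>Runs of OMP on signal y (arbitrary tie-breaking in the argmax):
  \<open>omp_run A y k \<Lambda> x\<close> means that after k iterations the selected index set is
  \<Lambda> and the coefficient vector is x (so the residual is y - A x).\<close>
inductive omp_run :: "real^'n^'d \<Rightarrow> real^'d \<Rightarrow> nat \<Rightarrow> 'n set \<Rightarrow> real^'n \<Rightarrow> bool"
  for A y where
  start: "omp_run A y 0 {} 0"
| step: "\<lbrakk> omp_run A y k \<Lambda> x; y - A *v x \<noteq> 0;
           \<forall>i. \<bar>column i A \<bullet> (y - A *v x)\<bar> \<le> \<bar>column j A \<bullet> (y - A *v x)\<bar> \<rbrakk>
         \<Longrightarrow> omp_run A y (Suc k) (insert j \<Lambda>) (pinv_apply A (insert j \<Lambda>) y)"

end

theory Submission
  imports Defs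
begin

definition supd :: "real^'n \<Rightarrow> 'n set \<Rightarrow> bool" where
  "supd z S \<longleftrightarrow> (\<forall>i. i \<notin> S \<longrightarrow> z $ i = 0)"

lemma Av_inner: "(A *v u) \<bullet> v = (\<Sum>i\<in>UNIV. u$i * (column i A \<bullet> v))"
  by (simp add: matrix_mult_sum scalar_mult_eq_scaleR inner_sum_left)

lemma Av_inner_S:
  assumes "supd u S"
  shows "(A *v u) \<bullet> v = (\<Sum>i\<in>S. u$i * (column i A \<bullet> v))"
proof -
  have "(A *v u) \<bullet> v = (\<Sum>i\<in>UNIV. u$i * (column i A \<bullet> v))" by (rule Av_inner)
  also have "\<dots> = (\<Sum>i\<in>S. u$i * (column i A \<bullet> v))"
    by (rule sum.mono_neutral_right) (use assms in \<open>auto simp: supd_def\<close>)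
  finally show ?thesis .
qed

lemma orth_zero:
  assumes "supd u S" "\<forall>i\<in>S. column i A \<bullet> (A *v u) = 0"
  shows "A *v u = 0"
proof -
  have "(A *v u) \<bullet> (A *v u) = 0"
    using Av_inner_S[OF assms(1), of A "A *v u"] assms(2) by simp
  thus ?thesis by simp
qed

lemma Av_S:
  assumes "supd u S"
  shows "A *v u = (\<Sum>i\<in>S. u$i *\<^sub>R column i A)"
proof -
  have "A *v u = (\<Sum>i\<in>UNIV. u$i *\<^sub>R column i A)"
    by (simp add: matrix_mult_sum scalar_mult_eq_scaleR)
  also have "\<dots> = (\<Sum>i\<in>S. u$i *\<^sub>R column i A)"
    by (rule sum.mono_neutral_right) (use assms in \<open>auto simp: supd_def\<close>)
  finally show ?thesis .
qed

lemma fcr_zero: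
  assumes "full_col_rank A S" "supd u S" "A *v u = 0"
  shows "u = 0"
proof -
  let ?f = "\<lambda>i. column i A"
  have inj: "inj_on ?f S" and ind: "independent (?f ` S)"
    using assms(1) by (auto simp: full_col_rank_def)
  define g where "g v = u $ (the_inv_into S ?f v)" for v
  have "(\<Sum>v\<in>?f ` S. g v *\<^sub>R v) = (\<Sum>i\<in>S. g (?f i) *\<^sub>R ?f i)"
    by (rule sum.reindex[OF inj, unfolded comp_def])
  also have "\<dots> = (\<Sum>i\<in>S. u$i *\<^sub>R column i A)"
    by (rule sum.cong) (auto simp: g_def the_inv_into_f_f[OF inj])
  also have "\<dots> = 0" using Av_S[OF assms(2), where A=A] assms(3) by simp
  finally have "(\<Sum>v\<in>?f ` S. g v *\<^sub>R v) = 0" .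
  with ind have "\<forall>v\<in>?f ` S. g v = 0"
    using dependent_finite[of "?f ` S"] by auto
  hence "\<forall>i\<in>S. u $ i = 0"
    by (auto simp: g_def the_inv_into_f_f[OF inj])
  with assms(2) show ?thesis by (auto simp: supd_def vec_eq_iff)
qed

lemma fcr_mono: "full_col_rank A S \<Longrightarrow> T \<subseteq> S \<Longrightarrow> full_col_rank A T"
  unfolding full_col_rank_def
  by (meson image_mono independent_mono inj_on_subset)

lemma quad_exp: "((e::'a::real_inner) - t *\<^sub>R a) \<bullet> (e - t *\<^sub>R a) = e \<bullet> e - 2*t*(a \<bullet> e) + t*t*(a \<bullet> a)"
proof -
  have "e \<bullet> a = a \<bullet> e" by (rule inner_commute)
  thus ?thesis by (simp add: inner_diff_left inner_diff_right right_diff_distrib)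
qed

lemma arith_aux:
  fixes s p q :: real
  assumes "0 \<le> (s*p)*(s*p)*q - 2*(s*p)*p" "s*q - 2 < 0" "0 < s"
  shows "p^2 \<le> 0"
proof (rule ccontr)
  assume "\<not> p^2 \<le> 0"
  hence p2: "p^2 > 0" by simp
  have "(s*p)*(s*p)*q - 2*(s*p)*p = (s * p^2) * (s*q - 2)"
    by (simp add: power2_eq_square algebra_simps)
  moreover have "(s * p^2) * (s*q - 2) < 0"
    using assms(2,3) p2 by (simp add: mult_pos_neg)
  ultimately show False using assms(1) by linarith
qed

lemma ls_orth:
  assumes "z \<in> ls_set A S b" "i \<in> S"
  shows "column i A \<bullet> (b - A *v z) = 0"
proof -
  let ?e = "b - A *v z" and ?a = "column i A"
  define p where "p = ?a \<bullet> ?e"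
  define s where "s = 1 / (?a \<bullet> ?a + 1)"
  have a0: "?a \<bullet> ?a \<ge> 0" by simp
  have d: "0 < ?a \<bullet> ?a + 1" using a0 by linarith
  have s1: "s > 0" using d by (simp add: s_def)
  have "s * (?a \<bullet> ?a) = (?a \<bullet> ?a) / (?a \<bullet> ?a + 1)" by (simp add: s_def)
  also have "\<dots> < 1" using d by (simp add: divide_less_eq_1_pos)
  finally have s: "s > 0" "s * (?a \<bullet> ?a) < 1" using s1 by auto
  define t where "t = s * p"
  define w where "w = z + axis i t"
  have sw: "\<forall>k. k \<notin> S \<longrightarrow> w $ k = 0" using assms unfolding w_def ls_set_def
    by (auto simp: axis_def)
  have nl: "norm ?e \<le> norm (b - A *v w)"
    using assms(1) sw unfolding ls_set_def by blast
  have Aw: "A *v w = A *v z + t *\<^sub>R ?a"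
  proof -
    have "axis i t = t *\<^sub>R axis i (1::real)"
      by (simp add: vec_eq_iff axis_def)
    thus ?thesis unfolding w_def
      by (simp add: matrix_vector_right_distrib matrix_vector_mult_scaleR matrix_vector_mult_basis)
  qed
  have pe2: "?a \<bullet> ?e = p" by (simp add: p_def)
  have e1: "(?e - t *\<^sub>R ?a) \<bullet> (?e - t *\<^sub>R ?a) = ?e \<bullet> ?e - 2*t*p + t*t*(?a \<bullet> ?a)"
    by (simp only: quad_exp pe2)
  have eq: "b - A *v w = ?e - t *\<^sub>R ?a" using Aw by simp
  have "?e \<bullet> ?e \<le> (?e - t *\<^sub>R ?a) \<bullet> (?e - t *\<^sub>R ?a)"
    using nl unfolding eq by (simp only: norm_le)
  hence "0 \<le> t*t*(?a \<bullet> ?a) - 2*t*p" using e1 by linarith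
  moreover have "s * (?a \<bullet> ?a) - 2 < 0" using s by simp
  ultimately have "p^2 \<le> 0" using s(1) unfolding t_def by (rule arith_aux)
  hence "p = 0" by simp
  thus ?thesis by (simp add: p_def)
qed

lemma orth_ls:
  assumes "supd z S" "\<forall>i\<in>S. column i A \<bullet> (b - A *v z) = 0"
  shows "z \<in> ls_set A S b"
  unfolding ls_set_def
proof (intro CollectI conjI allI impI)
  show "\<And>i. i \<notin> S \<Longrightarrow> z $ i = 0" using assms(1) by (auto simp: supd_def)
  fix w :: "real^'a" assume "\<forall>i. i \<notin> S \<longrightarrow> w $ i = 0"
  hence sw: "supd (z - w) S" using assms(1) by (auto simp: supd_def)
  let ?e = "b - A *v z" and ?v = "A *v (z - w)"
  have o: "?v \<bullet> ?e = 0"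
    using Av_inner_S[OF sw, of A ?e] assms(2) by simp
  have eq: "b - A *v w = ?e + ?v" by (simp add: matrix_vector_mult_diff_distrib)
  have "(b - A *v w) \<bullet> (b - A *v w) = (?e + ?v) \<bullet> (?e + ?v)" by (simp only: eq)
  also have "\<dots> = ?e \<bullet> ?e + ?v \<bullet> ?v"
    using o by (simp add: inner_add_left inner_add_right inner_commute)
  finally have "(b - A *v w) \<bullet> (b - A *v w) = ?e \<bullet> ?e + ?v \<bullet> ?v" .
  hence "?e \<bullet> ?e \<le> (b - A *v w) \<bullet> (b - A *v w)" by simp
  thus "norm ?e \<le> norm (b - A *v w)" by (simp add: norm_le)
qed

lemma ls_exists:
  fixes A :: "real^'n^'d"
  shows "\<exists>z. z \<in> ls_set A S b"
proof -
  let ?f = "\<lambda>i. column i A"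
  let ?V = "?f ` S"
  obtain p q where p: "p \<in> span ?V" and q: "\<And>w. w \<in> span ?V \<Longrightarrow> orthogonal q w"
    and bpq: "b = p + q"
    by (rule orthogonal_subspace_decomp_exists[of ?V b]) blast
  have "finite ?V" by simp
  then obtain u where pu: "p = (\<Sum>v\<in>?V. u v *\<^sub>R v)"
    using p span_finite[of ?V] by auto
  obtain S' where S': "S' \<subseteq> S" "inj_on ?f S'" "?f ` S' = ?V"
  proof -
    have "?V \<subseteq> ?f ` S" by (rule subset_refl)
    then obtain U where "U \<subseteq> S" "inj_on ?f U" "?V = ?f ` U"
      unfolding subset_image_inj by blast
    thus ?thesis using that by simp
  qed
  define z :: "real^'n" where "z = (\<chi> i. if i \<in> S' then u (?f i) else 0)"
  have sz: "supd z S'" by (simp add: supd_def z_def)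
  have "A *v z = (\<Sum>i\<in>S'. z$i *\<^sub>R ?f i)" by (rule Av_S[OF sz])
  also have "\<dots> = (\<Sum>i\<in>S'. u (?f i) *\<^sub>R ?f i)"
    by (rule sum.cong) (auto simp: z_def)
  also have "\<dots> = p" unfolding pu
    using sum.reindex[OF S'(2), of "\<lambda>v. u v *\<^sub>R v"] S'(3) by simp
  finally have Az: "A *v z = p" .
  have "supd z S" using sz S'(1) by (auto simp: supd_def)
  moreover have "\<forall>i\<in>S. column i A \<bullet> (b - A *v z) = 0"
  proof
    fix i assume "i \<in> S"
    hence "?f i \<in> span ?V" by (simp add: span_base)
    hence "orthogonal q (?f i)" by (rule q)
    thus "column i A \<bullet> (b - A *v z) = 0"
      using Az bpq by (simp add: orthogonal_def inner_commute)
  qed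
  ultimately show ?thesis using orth_ls by blast
qed

lemma ls_unique:
  assumes "full_col_rank A S" "z \<in> ls_set A S b" "w \<in> ls_set A S b"
  shows "z = w"
proof -
  have s: "supd (z - w) S" using assms(2,3) by (auto simp: ls_set_def supd_def)
  have "A *v (z - w) = (b - A *v w) - (b - A *v z)"
    by (simp add: matrix_vector_mult_diff_distrib)
  hence "\<forall>i\<in>S. column i A \<bullet> (A *v (z - w)) = 0"
    using ls_orth[OF assms(2)] ls_orth[OF assms(3)] by (simp add: inner_diff_right)
  hence "A *v (z - w) = 0" using orth_zero[OF s] by blast
  hence "z - w = 0" using fcr_zero[OF assms(1) s] by blast
  thus ?thesis by simp
qed

lemma pinv_ls:
  assumes "full_col_rank A S"
  shows "pinv_apply A S b \<in> ls_set A S b"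
proof -
  obtain z where z: "z \<in> ls_set A S b" using ls_exists by blast
  have "pinv_apply A S b = z"
    unfolding pinv_apply_def
    by (rule the_equality) (use z ls_unique[OF assms] in auto)
  with z show ?thesis by simp
qed

lemma pinv_props:
  assumes "full_col_rank A S"
  shows "supd (pinv_apply A S b) S"
    "\<forall>i\<in>S. column i A \<bullet> (b - A *v pinv_apply A S b) = 0"
  using pinv_ls[OF assms, of b] ls_orth[of _ A S b]
  by (auto simp: ls_set_def supd_def)

lemma invariant:
  fixes A :: "real^'n^'d" and x0 :: "real^'n"
  assumes erc: "ERC A S" and s0: "supd x0 S"
  shows "omp_run A (A *v x0) k L x \<Longrightarrow>
     L \<subseteq> S \<and> card L = k \<and> supd x L \<and>
     (\<forall>i\<in>L. column i A \<bullet> (A *v x0 - A *v x) = 0)"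
proof (induction rule: omp_run.induct)
  case start
  then show ?case by (simp add: supd_def)
next
  case (step k L x j)
  let ?y = "A *v x0"
  let ?r = "?y - A *v x"
  have fcr: "full_col_rank A S" using erc by (simp add: ERC_def)
  from step.IH have LS: "L \<subseteq> S" and cL: "card L = k" and sx: "supd x L"
    and oL: "\<forall>i\<in>L. column i A \<bullet> ?r = 0" by auto
  have su: "supd (x0 - x) S" using s0 sx LS by (auto simp: supd_def)
  have ru: "?r = A *v (x0 - x)" by (simp add: matrix_vector_mult_diff_distrib)
  have allzero: "False" if "\<forall>i\<in>S. column i A \<bullet> ?r = 0"
  proof -
    have "A *v (x0 - x) = 0" using orth_zero[OF su] that ru by simp
    with ru step.hyps(2) show False by simp
  qed
  have jS: "j \<in> S"
  proof (rule ccontr)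
    assume jn: "j \<notin> S"
    define c where "c = pinv_apply A S (column j A)"
    have l1: "l1norm c < 1" using erc jn by (simp add: ERC_def c_def)
    have sc: "supd c S" and oc: "\<forall>i\<in>S. column i A \<bullet> (column j A - A *v c) = 0"
      using pinv_props[OF fcr] c_def by auto
    have "(column j A - A *v c) \<bullet> ?r = 0"
      using Av_inner_S[OF su, of A "column j A - A *v c"] oc ru
      by (simp add: inner_commute)
    hence "column j A \<bullet> ?r = (A *v c) \<bullet> ?r" by (simp add: inner_diff_left)
    also have "\<dots> = (\<Sum>i\<in>UNIV. c$i * (column i A \<bullet> ?r))" by (rule Av_inner)
    finally have eq: "column j A \<bullet> ?r = (\<Sum>i\<in>UNIV. c$i * (column i A \<bullet> ?r))" .
    have "\<bar>column j A \<bullet> ?r\<bar> \<le> (\<Sum>i\<in>UNIV. \<bar>c$i * (column i A \<bullet> ?r)\<bar>)"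
      unfolding eq by (rule sum_abs)
    also have "\<dots> \<le> (\<Sum>i\<in>UNIV. \<bar>c$i\<bar> * \<bar>column j A \<bullet> ?r\<bar>)"
      by (rule sum_mono) (use step.hyps(3) in \<open>auto simp: abs_mult intro: mult_left_mono\<close>)
    also have "\<dots> = l1norm c * \<bar>column j A \<bullet> ?r\<bar>"
      by (simp add: l1norm_def sum_distrib_right)
    finally have "\<bar>column j A \<bullet> ?r\<bar> \<le> l1norm c * \<bar>column j A \<bullet> ?r\<bar>" .
    hence "(1 - l1norm c) * \<bar>column j A \<bullet> ?r\<bar> \<le> 0" by (simp add: algebra_simps)
    with l1 have "\<bar>column j A \<bullet> ?r\<bar> \<le> 0"
      by (simp add: mult_le_0_iff)
    hence z: "column j A \<bullet> ?r = 0" by simp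
    have "\<forall>i. column i A \<bullet> ?r = 0"
    proof
      fix i show "column i A \<bullet> ?r = 0" using step.hyps(3)[rule_format, of i] z by simp
    qed
    thus False using allzero by blast
  qed
  have jL: "j \<notin> L"
  proof
    assume "j \<in> L"
    hence "column j A \<bullet> ?r = 0" using oL by blast
    hence z: "column j A \<bullet> ?r = 0" by simp
    have "\<forall>i. column i A \<bullet> ?r = 0"
    proof
      fix i show "column i A \<bullet> ?r = 0" using step.hyps(3)[rule_format, of i] z by simp
    qed
    thus False using allzero by blast
  qed
  have LS': "insert j L \<subseteq> S" using jS LS by blast
  have fcr': "full_col_rank A (insert j L)" by (rule fcr_mono[OF fcr LS'])
  have "finite L" by simp
  then show ?case using LS' cL jL pinv_props[OF fcr', of ?y] by simp
qed

theorem theorem10: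
  fixes A :: "real^'n^'d" and x0 x1 :: "real^'n" and m0 m1 :: nat
  assumes "CARD('n) > CARD('d)"
    and "\<forall>i. column i A \<noteq> 0"
    and "card (supp x0) = m0"
    and "\<not> ERC A (supp x0)"
    and "supp x0 \<subseteq> supp x1" and "card (supp x1) = m1" and "m1 > m0"
    and "ERC A (supp x1)"
  shows "\<forall>k \<Lambda> x. omp_run A (A *v x0) k \<Lambda> x \<longrightarrow>
           k \<le> m1 \<and> (A *v x0 - A *v x \<noteq> 0 \<longrightarrow> k < m1) \<and>
           (A *v x0 - A *v x = 0 \<longrightarrow> x = x0)"
proof (intro allI impI)
  fix k L x assume run: "omp_run A (A *v x0) k L x"
  let ?S = "supp x1"
  let ?r = "A *v x0 - A *v x"
  have s0: "supd x0 ?S" using assms(5) by (auto simp: supd_def supp_def)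
  have fcr: "full_col_rank A ?S" using assms(8) by (simp add: ERC_def)
  from invariant[OF assms(8) s0 run] have LS: "L \<subseteq> ?S" and cL: "card L = k"
    and sx: "supd x L" and oL: "\<forall>i\<in>L. column i A \<bullet> ?r = 0" by auto
  have su: "supd (x0 - x) ?S" using s0 sx LS by (auto simp: supd_def)
  have ru: "?r = A *v (x0 - x)" by (simp add: matrix_vector_mult_diff_distrib)
  have fin: "finite ?S" by simp
  have "k \<le> m1" using card_mono[OF fin LS] cL assms(6) by simp
  moreover have "k < m1" if "?r \<noteq> 0"
  proof -
    have "\<not> (\<forall>i\<in>?S. column i A \<bullet> ?r = 0)"
      using orth_zero[OF su] ru that by auto
    then obtain i where "i \<in> ?S" "column i A \<bullet> ?r \<noteq> 0" by blast
    with oL LS have "L \<subset> ?S" by blast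
    thus ?thesis using psubset_card_mono[OF fin] cL assms(6) by blast
  qed
  moreover have "x = x0" if "?r = 0"
  proof -
    have "x0 - x = 0" using fcr_zero[OF fcr su] ru that by simp
    thus ?thesis by simp
  qed
  ultimately show "k \<le> m1 \<and> (?r \<noteq> 0 \<longrightarrow> k < m1) \<and> (?r = 0 \<longrightarrow> x = x0)" by blast
qed

end
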